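(* Let $D$ be the distance matrix of $n$ points in $\mathbb R^d$ with $n>d+2$, let $C$ be its centered distance matrix, and let $\lambda_2(C)$ denote the second largest eigenvalue of $C$ (counted with multiplicity). Then $D=C+\lambda_2(C)\,J$. In particular $D$ is uniquely determined by $C$, and hence by $\Delta(D)$.
   Context: The distance matrix of points $x_1,\dots,x_n\in\mathbb R^d$ is $D_{ij}=\|x_i-x_j\|_2^2$. Let $J=\mathbf 1\mathbf 1^T-I$. The centered distance matrix of $D$ is $C=D-\sigma_DJ$ with $\sigma_D=\mathrm{tr}(DJ)/\|J\|_F^2$, i.e. the component of $D$ orthogonal to $J$ in the trace inner product. $\Delta(D)=(D_{ij}-D_{ik})$ indexed by triples $(i,j,k)$ of pairwise distinct indices with $j<k$; its kernel on symmetric hollow matrices is the span of $J$. *)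

theory Defs
  imports "Jordan_Normal_Form.Char_Poly" "HOL-Library.Multiset"
begin

definition dist_matrix :: "nat \<Rightarrow> (nat \<Rightarrow> real vec) \<Rightarrow> real mat" where
  "dist_matrix n x = mat n n (\<lambda>(i,j). (x i - x j) \<bullet> (x i - x j))"

definition Jmat :: "nat \<Rightarrow> real mat" where
  "Jmat n = mat n n (\<lambda>(i,j). if i = j then 0 else 1)"

definition frob_sq :: "real mat \<Rightarrow> real" where
  "frob_sq A = (\<Sum>i<dim_row A. \<Sum>j<dim_col A. (A $$ (i,j))^2)"

definition sigma :: "real mat \<Rightarrow> real" where
  "sigma D = (\<Sum>i<dim_row D. (D * Jmat (dim_row D)) $$ (i,i)) / frob_sq (Jmat (dim_row D))"

definition centered :: "real mat \<Rightarrow> real mat" where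
  "centered D = D - sigma D \<cdot>\<^sub>m Jmat (dim_row D)"

definition eig_mset :: "real mat \<Rightarrow> real multiset" where
  "eig_mset A = proots (char_poly A)"

definition lambda2 :: "real mat \<Rightarrow> real" where
  "lambda2 A = rev (sorted_list_of_multiset (eig_mset A)) ! 1"

definition Delta :: "real mat \<Rightarrow> nat \<times> nat \<times> nat \<Rightarrow> real" where
  "Delta D = (\<lambda>(i,j,k). if i < dim_row D \<and> j < dim_row D \<and> k < dim_row D \<and> i \<noteq> j \<and> i \<noteq> k \<and> j < k
      then D $$ (i,j) - D $$ (i,k) else 0)"

end

theory Submission imports Defs "Jordan_Normal_Form.Schur_Decomposition" begin

lemma sym_real_eigenvalue:
  fixes A :: "real mat"
  assumes A: "A \<in> carrier_mat n n" and sym: "A\<^sup>T = A" and n: "0 < n"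
  shows "\<exists>e. eigenvalue A e"
proof -
  let ?Ac = "map_mat complex_of_real A"
  have Ac: "?Ac \<in> carrier_mat n n" using A by auto
  obtain as where cp: "char_poly ?Ac = (\<Prod>a\<leftarrow>as. [:-a,1:])" and len: "length as = n"
    using char_poly_factorized[OF Ac] by auto
  define z where "z = as ! 0"
  have zin: "z \<in> set as" using len n unfolding z_def by auto
  have "poly (char_poly ?Ac) z = 0" unfolding cp poly_prod_list prod_list_zero_iff
    using zin by auto
  then have "eigenvalue ?Ac z" using eigenvalue_root_char_poly[OF Ac] by simp
  then obtain v where ev: "eigenvector ?Ac v z" unfolding eigenvalue_def by auto
  hence v: "v \<in> carrier_vec n" "v \<noteq> 0\<^sub>v n" "?Ac *\<^sub>v v = z \<cdot>\<^sub>v v"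
    unfolding eigenvector_def using Ac by auto
  have comp: "(\<Sum>j<n. complex_of_real (A$$(i,j)) * v$j) = z * v$i" if i: "i<n" for i
  proof -
    have "(?Ac *\<^sub>v v) $ i = (z \<cdot>\<^sub>v v) $ i" using v(3) by simp
    thus ?thesis using i A v(1) by (auto simp: scalar_prod_def lessThan_atLeast0 mult.commute)
  qed
  define s where "s = (\<Sum>i<n. \<Sum>j<n. cnj (v$i) * (complex_of_real (A$$(i,j)) * v$j))"
  define q where "q = (\<Sum>i<n. cnj (v$i) * v$i)"
  have s1: "s = z * q"
  proof -
    have "s = (\<Sum>i<n. cnj (v$i) * (\<Sum>j<n. complex_of_real (A$$(i,j)) * v$j))"
      unfolding s_def by (simp only: sum_distrib_left)
    also have "\<dots> = (\<Sum>i<n. z * (cnj (v$i) * v$i))"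
      by (intro sum.cong refl, simp only: comp lessThan_iff, simp)
    also have "\<dots> = z * q" unfolding q_def by (simp only: sum_distrib_left)
    finally show ?thesis .
  qed
  have symA: "A$$(i,j) = A$$(j,i)" if "i<n" "j<n" for i j
    using sym that A by (metis carrier_matD index_transpose_mat(1))
  have s2: "cnj s = s"
  proof -
    have "cnj s = (\<Sum>i<n. \<Sum>j<n. v$i * (complex_of_real (A$$(i,j)) * cnj (v$j)))"
      unfolding s_def by (simp add: mult.assoc)
    also have "\<dots> = (\<Sum>j<n. \<Sum>i<n. v$i * (complex_of_real (A$$(i,j)) * cnj (v$j)))"
      by (rule sum.swap)
    also have "\<dots> = s" unfolding s_def
      by (intro sum.cong refl, simp add: symA mult.commute mult.left_commute)
    finally show ?thesis .
  qed
  have qr: "q = complex_of_real (\<Sum>i<n. (cmod (v$i))^2)"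
    unfolding q_def of_real_sum by (intro sum.cong refl, metis complex_norm_square of_real_power mult.commute)
  obtain k where k: "k < n" "v $ k \<noteq> 0" using v(1,2) by (metis eq_vecI carrier_vecD index_zero_vec)
  have "(\<Sum>i<n. (cmod (v$i))^2) > 0"
  proof -
    have "(cmod (v$k))^2 > 0" using k by simp
    also have "(cmod (v$k))^2 \<le> (\<Sum>i<n. (cmod (v$i))^2)"
      by (rule member_le_sum, insert k, auto)
    finally show ?thesis .
  qed
  hence q0: "q \<noteq> 0" "cnj q = q" using qr by (metis less_irrefl of_real_eq_0_iff, metis complex_cnj_complex_of_real)
  from s1 s2 have "cnj z * cnj q = z * q" by simp
  with q0 have "cnj z = z" by simp
  hence zr: "z = complex_of_real (Re z)" by (metis Reals_cnj_iff complex_is_Real_iff of_real_Re)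
  have h: "poly (map_poly complex_of_real (char_poly A)) z = 0"
    using \<open>poly (char_poly ?Ac) z = 0\<close> of_real_hom.char_poly_hom[OF A] by metis
  have "complex_of_real (poly (char_poly A) (Re z)) = 0" using h zr by (metis of_real_hom.poly_map_poly)
  hence "poly (char_poly A) (Re z) = 0" by simp
  thus ?thesis using eigenvalue_root_char_poly[OF A] by blast
qed


lemma conjugate_real_vec[simp]: "conjugate (w :: real vec) = w"
  by (rule eq_vecI, auto)

lemma WAW_index:
  fixes W A :: "real mat"
  assumes W: "W \<in> carrier_mat n n" and A: "A \<in> carrier_mat n n" and i: "i < n" and j: "j < n"
  shows "(W\<^sup>T * A * W) $$ (i,j) = col W i \<bullet> (A *\<^sub>v col W j)"
proof -
  have "(W\<^sup>T * A * W) $$ (i,j) = (W\<^sup>T * (A * W)) $$ (i,j)" using W A by (simp add: assoc_mult_mat[of _ n n _ n _ n])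
  also have "\<dots> = row W\<^sup>T i \<bullet> col (A * W) j" using W A i j by simp
  also have "col (A * W) j = A *\<^sub>v col W j" by (rule col_mult2[OF A W j])
  also have "row W\<^sup>T i = col W i" using W i by simp
  finally show ?thesis .
qed

lemma spectral_real_sym:
  fixes A :: "real mat"
  assumes "A \<in> carrier_mat n n" "A\<^sup>T = A"
  shows "\<exists>P. P \<in> carrier_mat n n \<and> P\<^sup>T * P = 1\<^sub>m n \<and> P * P\<^sup>T = 1\<^sub>m n \<and> diagonal_mat (P\<^sup>T * A * P)"
  using assms
proof (induction n arbitrary: A)
  case 0
  show ?case
    by (rule exI[of _ "1\<^sub>m 0"], insert 0, auto simp: diagonal_mat_def)
next
  case (Suc m A)
  define n where "n = Suc m"
  have A: "A \<in> carrier_mat n n" and sym: "A\<^sup>T = A" using Suc n_def by auto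
  obtain e where e: "eigenvalue A e" using sym_real_eigenvalue[OF A sym] n_def by auto
  define v where "v = find_eigenvector A e"
  from find_eigenvector[OF A e] have "eigenvector A v e" unfolding v_def .
  hence v: "v \<in> carrier_vec n" "v \<noteq> 0\<^sub>v n" "A *\<^sub>v v = e \<cdot>\<^sub>v v"
    unfolding eigenvector_def using A by auto
  have vv: "v \<bullet> v > 0"
  proof -
    have "v \<bullet> v \<noteq> 0" using v(1,2) by (metis conjugate_real_vec conjugate_square_eq_0_vec)
    moreover have "v \<bullet> v \<ge> 0" using v(1) by (metis conjugate_real_vec conjugate_square_ge_0_vec)
    ultimately show ?thesis by linarith
  qed
  define u where "u = (1 / sqrt (v \<bullet> v)) \<cdot>\<^sub>v v"
  have u: "u \<in> carrier_vec n" using v unfolding u_def by auto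
  have uu: "u \<bullet> u = 1" unfolding u_def using v(1) vv
    by (simp add: smult_scalar_prod_distrib scalar_prod_smult_distrib real_sqrt_mult[symmetric])
  hence u0: "u \<noteq> 0\<^sub>v n" using u by auto
  have Au: "A *\<^sub>v u = e \<cdot>\<^sub>v u" unfolding u_def using A v
    by (simp add: mult_mat_vec smult_smult_assoc mult.commute)
  interpret cof_vec_space n "TYPE(real)" .
  define b where "b = basis_completion u"
  from basis_completion[OF u u0, folded b_def]
  have dist_b: "distinct b" and indep: "\<not> lin_dep (set b)" and b: "set b \<subseteq> carrier_vec n"
    and hdb: "hd b = u" and len_b: "length b = n" by auto
  from hdb len_b n_def obtain vs where bv: "b = u # vs" by (cases b, auto)
  define ws where "ws = gram_schmidt n b"
  from gram_schmidt_result[OF b dist_b indep ws_def]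
  have ws: "set ws \<subseteq> carrier_vec n" "corthogonal ws" "length ws = n" by (auto simp: len_b)
  have hdws: "hd ws = u" unfolding ws_def bv using u by simp
  have wsi: "ws ! i \<in> carrier_vec n" if "i < n" for i using ws that by auto
  have orth: "ws ! i \<bullet> ws ! j = 0 \<longleftrightarrow> i \<noteq> j" if "i < n" "j < n" for i j
    using corthogonalD[OF ws(2), of i j] that ws(3) by simp
  have wpos: "ws ! i \<bullet> ws ! i > 0" if "i < n" for i
  proof -
    have "ws ! i \<bullet> ws ! i \<noteq> 0" using orth that by auto
    moreover have "ws ! i \<bullet> ws ! i \<ge> 0" using wsi[OF that] by (metis conjugate_real_vec conjugate_square_ge_0_vec)
    ultimately show ?thesis by linarith
  qed
  define ws' where "ws' = map (\<lambda>w. (1 / sqrt (w \<bullet> w)) \<cdot>\<^sub>v w) ws"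
  have len': "length ws' = n" unfolding ws'_def using ws by simp
  have ws'i: "ws' ! i = (1 / sqrt (ws ! i \<bullet> ws ! i)) \<cdot>\<^sub>v ws ! i" if "i < n" for i
    unfolding ws'_def using that ws by simp
  have ws'c: "ws' ! i \<in> carrier_vec n" if "i < n" for i using ws'i[OF that] wsi[OF that] by simp
  have on: "ws' ! i \<bullet> ws' ! j = (if i = j then 1 else 0)" if "i < n" "j < n" for i j
  proof -
    have "ws' ! i \<bullet> ws' ! j = (1 / sqrt (ws ! i \<bullet> ws ! i)) * (1 / sqrt (ws ! j \<bullet> ws ! j)) * (ws ! i \<bullet> ws ! j)"
      unfolding ws'i[OF that(1)] ws'i[OF that(2)] using wsi[OF that(1)] wsi[OF that(2)]
      by (simp add: smult_scalar_prod_distrib scalar_prod_smult_distrib)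
    thus ?thesis using orth[OF that] wpos[OF that(1)] by (auto simp: real_sqrt_mult[symmetric])
  qed
  have ws'0: "ws' ! 0 = u"
  proof -
    have "ws ! 0 = u" using hdws ws(3) n_def by (cases ws, auto)
    thus ?thesis using ws'i[of 0] n_def uu by simp
  qed
  define W where "W = mat_of_cols n ws'"
  have W: "W \<in> carrier_mat n n" unfolding W_def using len' mat_of_cols_carrier(1)[of n ws'] by simp
  have colW: "col W i = ws' ! i" if "i < n" for i unfolding W_def using that len' ws'c by simp
  have WTW: "W\<^sup>T * W = 1\<^sub>m n"
    by (rule eq_matI, insert W, auto simp: colW on)
  have WWT: "W * W\<^sup>T = 1\<^sub>m n" using mat_mult_left_right_inverse[of "W\<^sup>T" n W] WTW W by auto
  define A' where "A' = W\<^sup>T * A * W"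
  have A': "A' \<in> carrier_mat n n" unfolding A'_def using W A by auto
  have A'idx: "A' $$ (i,j) = ws' ! i \<bullet> (A *\<^sub>v ws' ! j)" if "i < n" "j < n" for i j
    unfolding A'_def using WAW_index[OF W A that] colW that by simp
  have symA': "A' $$ (i,j) = A' $$ (j,i)" if "i < n" "j < n" for i j
  proof -
    have "A'\<^sup>T = W\<^sup>T * (W\<^sup>T * A)\<^sup>T" unfolding A'_def using transpose_mult[of "W\<^sup>T * A" n n W n] W A by auto
    also have "(W\<^sup>T * A)\<^sup>T = A\<^sup>T * W" using transpose_mult[of "W\<^sup>T" n n A n] W A by auto
    finally have "A'\<^sup>T = A'" unfolding A'_def using sym W A by (simp add: assoc_mult_mat[of _ n n _ n _ n])
    thus ?thesis using that A' by (metis carrier_matD index_transpose_mat(1))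
  qed
  have A'0: "A' $$ (i,0) = (if i = 0 then e else 0)" if "i < n" for i
  proof -
    have "A' $$ (i,0) = ws' ! i \<bullet> (e \<cdot>\<^sub>v u)" using A'idx[OF that] n_def ws'0 Au by simp
    also have "\<dots> = e * (ws' ! i \<bullet> ws' ! 0)" using ws'c[OF that] u ws'0
      by (simp add: scalar_prod_smult_distrib)
    finally show ?thesis using on[OF that, of 0] n_def by simp
  qed
  define A3 where "A3 = mat m m (\<lambda>(i,j). A' $$ (Suc i, Suc j))"
  have A3: "A3 \<in> carrier_mat m m" unfolding A3_def by simp
  have symA3: "A3\<^sup>T = A3" unfolding A3_def using symA' n_def by (intro eq_matI, auto)
  have A'block: "A' = four_block_mat (mat 1 1 (\<lambda>_. e)) (0\<^sub>m 1 m) (0\<^sub>m m 1) A3"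
  proof (rule eq_matI)
    fix i j assume i: "i < dim_row (four_block_mat (mat 1 1 (\<lambda>_. e)) (0\<^sub>m 1 m) (0\<^sub>m m 1) A3)"
      and j: "j < dim_col (four_block_mat (mat 1 1 (\<lambda>_. e)) (0\<^sub>m 1 m) (0\<^sub>m m 1) A3)"
    hence i': "i < n" and j': "j < n" using A3 n_def by auto
    show "A' $$ (i,j) = four_block_mat (mat 1 1 (\<lambda>_. e)) (0\<^sub>m 1 m) (0\<^sub>m m 1) A3 $$ (i,j)"
    proof (cases "j = 0")
      case True thus ?thesis using A'0[OF i'] i' A3 n_def by auto
    next
      case False
      show ?thesis
      proof (cases "i = 0")
        case True thus ?thesis using A'0[OF j'] symA'[OF i' j'] False j' A3 n_def by auto
      next
        case False2: False
        thus ?thesis using False i' j' A3 n_def unfolding A3_def by (cases i; cases j; auto)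
      qed
    qed
  qed (insert A' A3 n_def, auto)
  from Suc.IH[OF A3 symA3] obtain P3 where P3: "P3 \<in> carrier_mat m m" "P3\<^sup>T * P3 = 1\<^sub>m m"
    "diagonal_mat (P3\<^sup>T * A3 * P3)" by auto
  define F where "F = four_block_mat (1\<^sub>m 1) (0\<^sub>m 1 m) (0\<^sub>m m 1) P3"
  have F: "F \<in> carrier_mat n n" unfolding F_def using P3 n_def by auto
  have FT: "F\<^sup>T = four_block_mat (1\<^sub>m 1) (0\<^sub>m 1 m) (0\<^sub>m m 1) P3\<^sup>T"
    unfolding F_def using P3 by (subst transpose_four_block_mat, auto)
  have c1: "(1\<^sub>m 1 :: real mat) \<in> carrier_mat 1 1" "(0\<^sub>m 1 m :: real mat) \<in> carrier_mat 1 m"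
     "(0\<^sub>m m 1 :: real mat) \<in> carrier_mat m 1" "P3\<^sup>T \<in> carrier_mat m m"
     "(mat 1 1 (\<lambda>_. e) :: real mat) \<in> carrier_mat 1 1" using P3 by auto
  have FTF: "F\<^sup>T * F = 1\<^sub>m n"
  proof -
    have "F\<^sup>T * F = four_block_mat (1\<^sub>m 1 * 1\<^sub>m 1 + 0\<^sub>m 1 m * 0\<^sub>m m 1) (1\<^sub>m 1 * 0\<^sub>m 1 m + 0\<^sub>m 1 m * P3)
       (0\<^sub>m m 1 * 1\<^sub>m 1 + P3\<^sup>T * 0\<^sub>m m 1) (0\<^sub>m m 1 * 0\<^sub>m 1 m + P3\<^sup>T * P3)"
      unfolding FT unfolding F_def by (rule mult_four_block_mat[OF c1(1-4) c1(1-3) P3(1)])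
    also have "\<dots> = four_block_mat (1\<^sub>m 1) (0\<^sub>m 1 m) (0\<^sub>m m 1) (1\<^sub>m m)"
      using P3 by (intro cong_four_block_mat, auto)
    also have "\<dots> = 1\<^sub>m n" unfolding four_block_one_mat n_def by simp
    finally show ?thesis .
  qed
  define P where "P = W * F"
  have P: "P \<in> carrier_mat n n" unfolding P_def using W F by auto
  have PT: "P\<^sup>T = F\<^sup>T * W\<^sup>T" unfolding P_def using W F transpose_mult by blast
  have PTP: "P\<^sup>T * P = 1\<^sub>m n"
  proof -
    have "P\<^sup>T * P = F\<^sup>T * (W\<^sup>T * W) * F" unfolding PT unfolding P_def using W F
      by (simp add: assoc_mult_mat[of _ n n _ n _ n])
    also have "\<dots> = 1\<^sub>m n" using WTW FTF F by simp
    finally show ?thesis .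
  qed
  have PPT: "P * P\<^sup>T = 1\<^sub>m n" using mat_mult_left_right_inverse[of "P\<^sup>T" n P] PTP P by auto
  have PAP: "P\<^sup>T * A * P = F\<^sup>T * A' * F" unfolding PT unfolding P_def A'_def using W F A
    by (simp add: assoc_mult_mat[of _ n n _ n _ n])
  also have "\<dots> = four_block_mat (mat 1 1 (\<lambda>_. e)) (0\<^sub>m 1 m) (0\<^sub>m m 1) (P3\<^sup>T * A3 * P3)"
  proof -
    let ?E = "mat 1 1 (\<lambda>_. e) :: real mat"
    have PA3: "P3\<^sup>T * A3 \<in> carrier_mat m m" using P3 A3 by auto
    have "F\<^sup>T * A' = four_block_mat (1\<^sub>m 1 * ?E + 0\<^sub>m 1 m * 0\<^sub>m m 1) (1\<^sub>m 1 * 0\<^sub>m 1 m + 0\<^sub>m 1 m * A3)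
       (0\<^sub>m m 1 * ?E + P3\<^sup>T * 0\<^sub>m m 1) (0\<^sub>m m 1 * 0\<^sub>m 1 m + P3\<^sup>T * A3)"
      unfolding FT unfolding A'block by (rule mult_four_block_mat[OF c1(1-4) c1(5) c1(2-3) A3])
    also have "\<dots> = four_block_mat ?E (0\<^sub>m 1 m) (0\<^sub>m m 1) (P3\<^sup>T * A3)"
      using P3 A3 by (intro cong_four_block_mat, auto)
    finally have 1: "F\<^sup>T * A' = four_block_mat ?E (0\<^sub>m 1 m) (0\<^sub>m m 1) (P3\<^sup>T * A3)" .
    have "F\<^sup>T * A' * F = four_block_mat (?E * 1\<^sub>m 1 + 0\<^sub>m 1 m * 0\<^sub>m m 1) (?E * 0\<^sub>m 1 m + 0\<^sub>m 1 m * P3)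
       (0\<^sub>m m 1 * 1\<^sub>m 1 + (P3\<^sup>T * A3) * 0\<^sub>m m 1) (0\<^sub>m m 1 * 0\<^sub>m 1 m + (P3\<^sup>T * A3) * P3)"
      unfolding 1 unfolding F_def by (rule mult_four_block_mat[OF c1(5) c1(2-3) PA3 c1(1-3) P3(1)])
    also have "\<dots> = four_block_mat ?E (0\<^sub>m 1 m) (0\<^sub>m m 1) (P3\<^sup>T * A3 * P3)"
      using P3 A3 by (intro cong_four_block_mat, auto)
    finally show ?thesis .
  qed
  finally have PAP': "P\<^sup>T * A * P = four_block_mat (mat 1 1 (\<lambda>_. e)) (0\<^sub>m 1 m) (0\<^sub>m m 1) (P3\<^sup>T * A3 * P3)" .
  have "diagonal_mat (P\<^sup>T * A * P)"
    unfolding PAP' using P3(3) P3(1) A3 unfolding diagonal_mat_def by auto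
  thus ?case using P PTP PPT n_def by auto
qed

lemma kernel_exists:
  fixes a :: "nat \<Rightarrow> real vec"
  assumes j: "j < n" and a: "\<And>i. i < n \<Longrightarrow> a i \<in> carrier_vec n" and aj: "a j = 0\<^sub>v n"
  shows "\<exists>w. w \<in> carrier_vec n \<and> w \<noteq> 0\<^sub>v n \<and> (\<forall>i<n. a i \<bullet> w = 0)"
proof -
  have eq: "mat\<^sub>r n n a = mat\<^sub>r n n (\<lambda>i. if i = j then 0\<^sub>v n else a i)"
    by (rule eq_matI, auto simp: aj)
  have "det (mat\<^sub>r n n a) = 0" unfolding eq by (rule det_row_0[OF j], insert a, auto)
  then obtain w where w: "w \<in> carrier_vec n" "w \<noteq> 0\<^sub>v n" "mat\<^sub>r n n a *\<^sub>v w = 0\<^sub>v n"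
    using det_0_iff_vec_prod_zero[of "mat\<^sub>r n n a" n] by auto
  have "a i \<bullet> w = 0" if i: "i < n" for i
  proof -
    have "(mat\<^sub>r n n a *\<^sub>v w) $ i = 0" using w(3) i by simp
    thus ?thesis using i a[OF i] by simp
  qed
  thus ?thesis using w by auto
qed

lemma form_expand:
  fixes C P :: "real mat"
  assumes P: "P \<in> carrier_mat n n" and C: "C \<in> carrier_mat n n"
    and PTP: "P\<^sup>T * P = 1\<^sub>m n" and PPT: "P * P\<^sup>T = 1\<^sub>m n"
    and diag: "diagonal_mat (P\<^sup>T * C * P)" and w: "w \<in> carrier_vec n"
  shows "w \<bullet> (C *\<^sub>v w) = (\<Sum>k<n. (P\<^sup>T * C * P) $$ (k,k) * (col P k \<bullet> w)^2)"
    and "w \<bullet> w = (\<Sum>k<n. (col P k \<bullet> w)^2)"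
proof -
  define c where "c = P\<^sup>T *\<^sub>v w"
  define L where "L = P\<^sup>T * C * P"
  have c: "c \<in> carrier_vec n" unfolding c_def using P w by auto
  have L: "L \<in> carrier_mat n n" unfolding L_def using P C by auto
  have ck: "c $ k = col P k \<bullet> w" if "k < n" for k unfolding c_def using P that by simp
  have wPc: "w = P *\<^sub>v c"
  proof -
    have "P *\<^sub>v c = (P * P\<^sup>T) *\<^sub>v w" unfolding c_def using P w by simp
    thus ?thesis using PPT w by simp
  qed
  have Lc: "L *\<^sub>v c = P\<^sup>T *\<^sub>v (C *\<^sub>v w)"
  proof -
    have PTC: "P\<^sup>T * C \<in> carrier_mat n n" using P C by auto
    have "L *\<^sub>v c = (P\<^sup>T * C) *\<^sub>v (P *\<^sub>v c)" unfolding L_def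
      by (rule assoc_mult_mat_vec[OF PTC P c])
    also have "\<dots> = P\<^sup>T *\<^sub>v (C *\<^sub>v (P *\<^sub>v c))"
      by (rule assoc_mult_mat_vec, insert P C c, auto)
    finally show ?thesis using wPc by simp
  qed
  have "w \<bullet> (C *\<^sub>v w) = (C *\<^sub>v w) \<bullet> (P *\<^sub>v c)" using w C wPc comm_scalar_prod[of w n "C *\<^sub>v w"] by simp
  also have "\<dots> = (P\<^sup>T *\<^sub>v (C *\<^sub>v w)) \<bullet> c"
    using transpose_vec_mult_scalar[OF P c, of "C *\<^sub>v w"] C w by simp
  also have "\<dots> = (L *\<^sub>v c) \<bullet> c" unfolding Lc ..
  also have "\<dots> = (\<Sum>k<n. L $$ (k,k) * (c $ k)^2)"
  proof -
    have "(L *\<^sub>v c) \<bullet> c = (\<Sum>k\<in>{0..<n}. (row L k \<bullet> c) * c $ k)"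
      unfolding scalar_prod_def[of "L *\<^sub>v c" c] using L c by simp
    also have "\<dots> = (\<Sum>k\<in>{0..<n}. L $$ (k,k) * (c $ k)^2)"
    proof (intro sum.cong refl)
      fix k assume k: "k \<in> {0..<n}"
      have "row L k \<bullet> c = (\<Sum>j\<in>{0..<n}. L $$ (k,j) * c $ j)"
        unfolding scalar_prod_def using L c k by simp
      also have "\<dots> = (\<Sum>j\<in>{0..<n}. if j = k then L $$ (k,k) * c $ k else 0)"
        using diag L k unfolding diagonal_mat_def L_def[symmetric] by (intro sum.cong refl, auto)
      also have "\<dots> = L $$ (k,k) * c $ k" using k by simp
      finally show "(row L k \<bullet> c) * c $ k = L $$ (k,k) * (c $ k)^2" by (simp add: power2_eq_square)
    qed
    finally show ?thesis by (simp add: atLeast0LessThan)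
  qed
  finally show "w \<bullet> (C *\<^sub>v w) = (\<Sum>k<n. (P\<^sup>T * C * P) $$ (k,k) * (col P k \<bullet> w)^2)"
    unfolding L_def by (simp add: ck)
  have "w \<bullet> w = w \<bullet> (P *\<^sub>v c)" using wPc by simp
  also have "\<dots> = (P\<^sup>T *\<^sub>v w) \<bullet> c" using transpose_vec_mult_scalar[OF P c w] by simp
  also have "\<dots> = (\<Sum>k<n. (c $ k)^2)" unfolding c_def[symmetric] scalar_prod_def using c
    by (simp add: atLeast0LessThan power2_eq_square)
  finally show "w \<bullet> w = (\<Sum>k<n. (col P k \<bullet> w)^2)" by (simp add: ck)
qed

lemma proots_linear_prod: "proots (\<Prod>a\<leftarrow>L. [:- a, 1:]) = mset (L :: real list)"
proof (induction L)
  case Nil thus ?case by simp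
next
  case (Cons a L)
  have "(\<Prod>a\<leftarrow>L. [:- a, 1:]) \<noteq> 0" by (auto simp: prod_list_zero_iff)
  have "proots ([:- a, 1:] * (\<Prod>a\<leftarrow>L. [:- a, 1:])) = proots [:- a, 1:] + proots (\<Prod>a\<leftarrow>L. [:- a, 1:])"
    by (rule proots_mult, insert \<open>(\<Prod>a\<leftarrow>L. [:- a, 1:]) \<noteq> 0\<close>, auto)
  also have "proots [:- a, 1:] = {#a#}" using proots_linear_factor[of "-a"] by simp
  finally show ?case using Cons by simp
qed

lemma eig_mset_diag:
  fixes C P :: "real mat"
  assumes P: "P \<in> carrier_mat n n" and C: "C \<in> carrier_mat n n"
    and PTP: "P\<^sup>T * P = 1\<^sub>m n" and PPT: "P * P\<^sup>T = 1\<^sub>m n"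
    and diag: "diagonal_mat (P\<^sup>T * C * P)"
  shows "eig_mset C = mset (map (\<lambda>k. (P\<^sup>T * C * P) $$ (k,k)) [0..<n])"
proof -
  define L where "L = P\<^sup>T * C * P"
  have L: "L \<in> carrier_mat n n" unfolding L_def using P C by auto
  have "P * L * P\<^sup>T = (P * P\<^sup>T) * C * (P * P\<^sup>T)" unfolding L_def
    using P C by (simp add: assoc_mult_mat[of _ n n _ n _ n])
  hence "C = P * L * P\<^sup>T" using PPT C by simp
  hence "similar_mat C L" unfolding similar_mat_def similar_mat_wit_def using P C L PTP PPT
    by (intro exI[of _ P] exI[of _ "P\<^sup>T"], auto simp: Let_def)
  hence "char_poly C = char_poly L" by (rule char_poly_similar)
  also have "upper_triangular L" using diag L unfolding L_def[symmetric] diagonal_mat_def upper_triangular_def by auto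
  hence "char_poly L = (\<Prod>a\<leftarrow>diag_mat L. [:- a, 1:])" using char_poly_upper_triangular[OF L] by auto
  finally have "eig_mset C = mset (diag_mat L)" unfolding eig_mset_def using proots_linear_prod by simp
  thus ?thesis using L unfolding L_def[symmetric] diag_mat_def by simp
qed

lemma second_largest:
  fixes L :: "real list"
  assumes ge: "2 \<le> length (filter (\<lambda>y. s \<le> y) L)" and gt: "length (filter (\<lambda>y. s < y) L) \<le> 1"
  shows "rev (sorted_list_of_multiset (mset L)) ! 1 = s"
proof -
  define R where "R = rev (sort L)"
  have sl: "rev (sorted_list_of_multiset (mset L)) = R" unfolding R_def by simp
  have sR: "sorted_wrt (\<ge>) R" unfolding R_def sorted_wrt_rev by simp
  have mRL: "mset R = mset L" unfolding R_def by simp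
  have fl: "length (filter P R) = length (filter P L)" for P
    by (metis mset_filter size_mset mRL)
  have "length R \<ge> 2" using ge fl[of "\<lambda>y. s \<le> y"] length_filter_le[of "\<lambda>y. s \<le> y" R] by linarith
  then obtain a b rest where R: "R = a # b # rest" by (cases R; cases "tl R", auto)
  from sR[unfolded R] have ab: "b \<le> a" and br: "\<forall>y\<in>set rest. y \<le> b" by auto
  have "b = s"
  proof (rule ccontr)
    assume "b \<noteq> s"
    then consider "b < s" | "b > s" by linarith
    thus False
    proof cases
      case 1
      have "filter (\<lambda>y. s \<le> y) (b # rest) = []" using 1 br by (auto simp: filter_empty_conv)
      hence "length (filter (\<lambda>y. s \<le> y) R) \<le> 1" unfolding R by simp
      thus False using ge fl[of "\<lambda>y. s \<le> y"] by linarith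
    next
      case 2
      have "length (filter (\<lambda>y. s < y) R) \<ge> 2" unfolding R using 2 ab by simp
      thus False using gt fl[of "\<lambda>y. s < y"] by linarith
    qed
  qed
  thus ?thesis unfolding sl R by simp
qed

lemma quad_ident:
  fixes w a :: "nat \<Rightarrow> real"
  shows "(\<Sum>i\<in>I. \<Sum>j\<in>I. w i * w j * (a i - a j)^2)
     = 2 * (\<Sum>i\<in>I. w i) * (\<Sum>i\<in>I. w i * (a i)^2) - 2 * (\<Sum>i\<in>I. w i * a i)^2"
proof -
  have "(\<Sum>i\<in>I. \<Sum>j\<in>I. w i * w j * (a i - a j)^2)
     = (\<Sum>i\<in>I. \<Sum>j\<in>I. (w i * (a i)^2) * w j + w i * (w j * (a j)^2) - 2 * (w i * a i) * (w j * a j))"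
    by (intro sum.cong refl, simp add: power2_eq_square algebra_simps)
  also have "\<dots> = (\<Sum>i\<in>I. (w i * (a i)^2) * (\<Sum>j\<in>I. w j) + w i * (\<Sum>j\<in>I. w j * (a j)^2) - (w i * a i) * (2 * (\<Sum>j\<in>I. w j * a j)))"
    by (intro sum.cong refl, simp add: sum.distrib sum_subtractf sum_distrib_left sum_distrib_right algebra_simps)
  also have "\<dots> = (\<Sum>i\<in>I. w i * (a i)^2) * (\<Sum>j\<in>I. w j) + (\<Sum>i\<in>I. w i) * (\<Sum>j\<in>I. w j * (a j)^2) - (\<Sum>i\<in>I. w i * a i) * (2 * (\<Sum>j\<in>I. w j * a j))"
    by (simp add: sum.distrib sum_subtractf sum_distrib_right)
  finally show ?thesis by (simp add: power2_eq_square algebra_simps)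
qed

lemma dist_matrix_carrier: "dist_matrix n x \<in> carrier_mat n n"
  unfolding dist_matrix_def by simp

lemma dist_entry:
  assumes x: "\<forall>i<n. x i \<in> carrier_vec d" and i: "i < n" and j: "j < n"
  shows "dist_matrix n x $$ (i,j) = (\<Sum>k<d. (x i $ k - x j $ k)^2)"
  using x i j unfolding dist_matrix_def
  by (auto simp: scalar_prod_def power2_eq_square atLeast0LessThan)

lemma quad_form_mat:
  fixes M :: "real mat"
  assumes M: "M \<in> carrier_mat n n" and w: "w \<in> carrier_vec n"
  shows "w \<bullet> (M *\<^sub>v w) = (\<Sum>i<n. \<Sum>j<n. w $ i * w $ j * M $$ (i,j))"
  using M w
  by (auto simp: scalar_prod_def atLeast0LessThan sum_distrib_left ac_simps intro!: sum.cong)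

lemma C_form:
  fixes x :: "nat \<Rightarrow> real vec"
  assumes x: "\<forall>i<n. x i \<in> carrier_vec d" and w: "w \<in> carrier_vec n" and s0: "(\<Sum>i<n. w $ i) = 0"
  shows "w \<bullet> ((dist_matrix n x - s \<cdot>\<^sub>m Jmat n) *\<^sub>v w)
     = -2 * (\<Sum>k<d. (\<Sum>i<n. w $ i * x i $ k)^2) + s * (w \<bullet> w)"
proof -
  let ?C = "dist_matrix n x - s \<cdot>\<^sub>m Jmat n"
  have C: "?C \<in> carrier_mat n n" unfolding dist_matrix_def Jmat_def carrier_mat_def by simp
  have Cij: "?C $$ (i,j) = (\<Sum>k<d. (x i $ k - x j $ k)^2) - s * (if i = j then 0 else 1)"
    if "i < n" "j < n" for i j
    using dist_entry[OF x that] that unfolding Jmat_def by (simp add: dist_matrix_def)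
  have "w \<bullet> (?C *\<^sub>v w) = (\<Sum>i<n. \<Sum>j<n. w $ i * w $ j * ((\<Sum>k<d. (x i $ k - x j $ k)^2) - s * (if i = j then 0 else 1)))"
    unfolding quad_form_mat[OF C w] by (intro sum.cong refl, simp add: Cij)
  also have "\<dots> = (\<Sum>i<n. \<Sum>j<n. w $ i * w $ j * (\<Sum>k<d. (x i $ k - x j $ k)^2))
      - s * (\<Sum>i<n. \<Sum>j<n. w $ i * w $ j * (if i = j then 0 else 1))"
    by (simp add: right_diff_distrib sum_subtractf sum_distrib_left mult.commute mult.left_commute)
  also have "(\<Sum>i<n. \<Sum>j<n. w $ i * w $ j * (\<Sum>k<d. (x i $ k - x j $ k)^2))
      = (\<Sum>k<d. \<Sum>i<n. \<Sum>j<n. w $ i * w $ j * (x i $ k - x j $ k)^2)"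
    by (simp add: sum_distrib_left sum.swap[of _ "{..<d}"])
  also have "\<dots> = (\<Sum>k<d. - 2 * (\<Sum>i<n. w $ i * x i $ k)^2)"
    by (intro sum.cong refl, subst quad_ident, simp add: s0)
  also have "(\<Sum>i<n. \<Sum>j<n. w $ i * w $ j * (if i = j then 0 else 1)) = (\<Sum>i<n. w $ i * ((\<Sum>j<n. w $ j) - w $ i))"
  proof (intro sum.cong refl)
    fix i assume i: "i \<in> {..<n}"
    have "(\<Sum>j<n. w $ i * w $ j * (if i = j then 0 else 1)) = (\<Sum>j<n. w $ i * w $ j - (if j = i then w $ i * w $ i else 0))"
      by (intro sum.cong refl, auto)
    also have "\<dots> = w $ i * (\<Sum>j<n. w $ j) - w $ i * w $ i" using i
      by (simp add: sum_subtractf sum_distrib_left)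
    finally show "(\<Sum>j<n. w $ i * w $ j * (if i = j then 0 else 1)) = w $ i * ((\<Sum>j<n. w $ j) - w $ i)"
      by (simp add: algebra_simps)
  qed
  also have "\<dots> = - (w \<bullet> w)" using s0 w
    by (simp add: right_diff_distrib sum_subtractf scalar_prod_def atLeast0LessThan sum_negf flip: sum_distrib_right)
  finally show ?thesis by (simp add: sum_distrib_left)
qed

lemma real_vec_pos:
  fixes w :: "real vec"
  assumes "w \<in> carrier_vec n" "w \<noteq> 0\<^sub>v n"
  shows "w \<bullet> w > 0"
proof -
  have "w \<bullet> w \<noteq> 0" using assms by (metis conjugate_real_vec conjugate_square_eq_0_vec)
  moreover have "w \<bullet> w \<ge> 0" using assms by (metis conjugate_real_vec conjugate_square_ge_0_vec)
  ultimately show ?thesis by linarith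
qed

lemma exists_nonzero_coeff:
  fixes c :: "nat \<Rightarrow> real"
  assumes "(\<Sum>k<n. (c k)^2) > 0"
  shows "\<exists>k<n. c k \<noteq> 0"
proof (rule ccontr)
  assume "\<not> ?thesis"
  hence "(\<Sum>k<n. (c k)^2) = 0" by simp
  thus False using assms by simp
qed

lemma main_lambda2:
  fixes x :: "nat \<Rightarrow> real vec" and s :: real
  assumes x: "\<forall>i<n. x i \<in> carrier_vec d" and nd: "d + 2 < n"
  shows "lambda2 (dist_matrix n x - s \<cdot>\<^sub>m Jmat n) = s"
proof -
  define C where "C = dist_matrix n x - s \<cdot>\<^sub>m Jmat n"
  have C: "C \<in> carrier_mat n n" unfolding C_def dist_matrix_def Jmat_def carrier_mat_def by simp
  have Cij: "C $$ (i,j) = (\<Sum>k<d. (x i $ k - x j $ k)^2) - s * (if i = j then 0 else 1)"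
    if "i < n" "j < n" for i j
    using dist_entry[OF x that] that unfolding Jmat_def C_def by (simp add: dist_matrix_def)
  have symC: "C\<^sup>T = C"
  proof (rule eq_matI)
    fix i j assume "i < dim_row C" "j < dim_col C"
    hence ij: "i < n" "j < n" using C by auto
    show "C\<^sup>T $$ (i, j) = C $$ (i, j)" using ij C Cij[OF ij] Cij[of j i]
      by (simp add: power2_commute eq_commute[of i j])
  qed (insert C, auto)
  obtain P where P: "P \<in> carrier_mat n n" "P\<^sup>T * P = 1\<^sub>m n" "P * P\<^sup>T = 1\<^sub>m n" "diagonal_mat (P\<^sup>T * C * P)"
    using spectral_real_sym[OF C symC] by auto
  define lam where "lam k = (P\<^sup>T * C * P) $$ (k,k)" for k
  have eig: "eig_mset C = mset (map lam [0..<n])"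
    using eig_mset_diag[OF P(1) C P(2) P(3) P(4)] unfolding lam_def .
  have fC: "w \<bullet> (C *\<^sub>v w) = (\<Sum>k<n. lam k * (col P k \<bullet> w)^2)" if "w \<in> carrier_vec n" for w
    using form_expand(1)[OF P(1) C P(2-4) that] unfolding lam_def .
  have fw: "w \<bullet> w = (\<Sum>k<n. (col P k \<bullet> w)^2)" if "w \<in> carrier_vec n" for w
    using form_expand(2)[OF P(1) C P(2-4) that] .
  have fD: "w \<bullet> (C *\<^sub>v w) = -2 * (\<Sum>k<d. (\<Sum>i<n. w $ i * x i $ k)^2) + s * (w \<bullet> w)"
    if "w \<in> carrier_vec n" "(\<Sum>i<n. w $ i) = 0" for w
    using C_form[OF x that] unfolding C_def .
  define ones where "ones = vec n (\<lambda>_. 1::real)"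
  have ones: "ones \<in> carrier_vec n" unfolding ones_def by simp
  have ones_w: "ones \<bullet> w = (\<Sum>i<n. w $ i)" if "w \<in> carrier_vec n" for w
    using that by (simp add: ones_def scalar_prod_def atLeast0LessThan)
  have colP: "col P k \<in> carrier_vec n" for k using P(1) by (simp add: carrier_vecI)
  have cw: "s * (w \<bullet> w) = (\<Sum>k<n. s * (col P k \<bullet> w)^2)" if "w \<in> carrier_vec n" for w
    unfolding fw[OF that] by (simp add: sum_distrib_left)
  have A: "length (filter (\<lambda>y. s < y) (map lam [0..<n])) \<le> 1"
  proof (rule ccontr)
    assume neg: "\<not> ?thesis"
    define F where "F = filter (\<lambda>k. s < lam k) [0..<n]"
    have lenF: "length F \<ge> 2" using neg unfolding F_def by (simp add: filter_map comp_def)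
    define i where "i = F ! 0"
    define j where "j = F ! 1"
    have setF: "set F = {k. k < n \<and> s < lam k}" unfolding F_def by auto
    have iF: "i \<in> set F" unfolding i_def using lenF by (intro nth_mem, linarith)
    have jF: "j \<in> set F" unfolding j_def using lenF by (intro nth_mem, linarith)
    have i: "i < n" "s < lam i" using iF setF by auto
    have j: "j < n" "s < lam j" using jF setF by auto
    have dF: "distinct F" unfolding F_def by simp
    have l01: "0 < length F" "1 < length F" using lenF by linarith+
    have ij: "i \<noteq> j" unfolding i_def j_def using nth_eq_iff_index_eq[OF dF l01] by simp
    define a where "a k = (if k = i then ones else if k = j then 0\<^sub>v n else col P k)" for k
    have "\<exists>w. w \<in> carrier_vec n \<and> w \<noteq> 0\<^sub>v n \<and> (\<forall>k<n. a k \<bullet> w = 0)"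
      by (rule kernel_exists[OF j(1)], insert ones colP ij, auto simp: a_def)
    then obtain w where w: "w \<in> carrier_vec n" "w \<noteq> 0\<^sub>v n" "\<And>k. k < n \<Longrightarrow> a k \<bullet> w = 0" by auto
    have sum0: "(\<Sum>i<n. w $ i) = 0" using w(3)[OF i(1)] ones_w[OF w(1)] by (simp add: a_def)
    have ck0: "col P k \<bullet> w = 0" if "k < n" "k \<noteq> i" "k \<noteq> j" for k
      using w(3)[OF that(1)] that by (simp add: a_def)
    have pos: "w \<bullet> w > 0" using real_vec_pos[OF w(1,2)] .
    have le: "w \<bullet> (C *\<^sub>v w) \<le> s * (w \<bullet> w)"
      using fD[OF w(1) sum0] by (simp add: sum_nonneg)
    obtain k where k: "k < n" "col P k \<bullet> w \<noteq> 0"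
      using exists_nonzero_coeff[of "\<lambda>k. col P k \<bullet> w" n] pos fw[OF w(1)] by auto
    have kij: "k = i \<or> k = j" using ck0 k by blast
    have "s * (w \<bullet> w) < w \<bullet> (C *\<^sub>v w)"
      unfolding cw[OF w(1)] fC[OF w(1)]
    proof (rule sum_strict_mono_ex1)
      show "\<forall>l\<in>{..<n}. s * (col P l \<bullet> w)^2 \<le> lam l * (col P l \<bullet> w)^2"
      proof
        fix l assume l: "l \<in> {..<n}"
        show "s * (col P l \<bullet> w)^2 \<le> lam l * (col P l \<bullet> w)^2"
        proof (cases "l = i \<or> l = j")
          case True
          hence "s \<le> lam l" using i j by auto
          thus ?thesis by (intro mult_right_mono, auto)
        next
          case False thus ?thesis using ck0 l by auto
        qed
      qed
      have "s < lam k" using kij i j by auto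
      hence "s * (col P k \<bullet> w)^2 < lam k * (col P k \<bullet> w)^2" using k(2) by (intro mult_strict_right_mono, auto)
      thus "\<exists>l\<in>{..<n}. s * (col P l \<bullet> w)^2 < lam l * (col P l \<bullet> w)^2" using k(1) by auto
    qed simp
    thus False using le by linarith
  qed
  have B: "2 \<le> length (filter (\<lambda>y. s \<le> y) (map lam [0..<n]))"
  proof (rule ccontr)
    assume neg: "\<not> ?thesis"
    define F where "F = filter (\<lambda>k. s \<le> lam k) [0..<n]"
    have lenF: "length F \<le> 1" using neg unfolding F_def by (simp add: filter_map comp_def)
    have setF: "set F = {k. k < n \<and> s \<le> lam k}" unfolding F_def by auto
    define q where "q = (if F = [] then 0\<^sub>v n else col P (hd F))"
    have q: "q \<in> carrier_vec n" unfolding q_def using colP by auto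
    have qk: "col P k = q" if "k < n" "s \<le> lam k" for k
    proof -
      have kF: "k \<in> set F" using setF that by auto
      then obtain y rest where F: "F = y # rest" by (cases F, auto)
      with lenF have "rest = []" by simp
      with kF F have "k = y" by simp
      thus ?thesis unfolding q_def F by simp
    qed
    define a where "a k = (if k < d then vec n (\<lambda>l. x l $ k) else if k = d then ones
      else if k = d + 1 then q else 0\<^sub>v n)" for k
    have "\<exists>w. w \<in> carrier_vec n \<and> w \<noteq> 0\<^sub>v n \<and> (\<forall>k<n. a k \<bullet> w = 0)"
      by (rule kernel_exists[of "n - 1"], insert nd ones q, auto simp: a_def)
    then obtain w where w: "w \<in> carrier_vec n" "w \<noteq> 0\<^sub>v n" "\<And>k. k < n \<Longrightarrow> a k \<bullet> w = 0" by auto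
    have sum0: "(\<Sum>i<n. w $ i) = 0" using w(3)[of d] nd ones_w[OF w(1)] by (simp add: a_def)
    have xs0: "(\<Sum>i<n. w $ i * x i $ k) = 0" if "k < d" for k
    proof -
      have "a k \<bullet> w = 0" using w(3)[of k] that nd by simp
      thus ?thesis using that w(1) by (simp add: a_def scalar_prod_def atLeast0LessThan mult.commute)
    qed
    have qw: "q \<bullet> w = 0" using w(3)[of "d+1"] nd by (simp add: a_def)
    have eq: "w \<bullet> (C *\<^sub>v w) = s * (w \<bullet> w)" using fD[OF w(1) sum0] xs0 by simp
    have pos: "w \<bullet> w > 0" using real_vec_pos[OF w(1,2)] .
    obtain k where k: "k < n" "col P k \<bullet> w \<noteq> 0"
      using exists_nonzero_coeff[of "\<lambda>k. col P k \<bullet> w" n] pos fw[OF w(1)] by auto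
    have "w \<bullet> (C *\<^sub>v w) < s * (w \<bullet> w)"
      unfolding cw[OF w(1)] fC[OF w(1)]
    proof (rule sum_strict_mono_ex1)
      show "\<forall>l\<in>{..<n}. lam l * (col P l \<bullet> w)^2 \<le> s * (col P l \<bullet> w)^2"
      proof
        fix l assume l: "l \<in> {..<n}"
        show "lam l * (col P l \<bullet> w)^2 \<le> s * (col P l \<bullet> w)^2"
        proof (cases "s \<le> lam l")
          case True thus ?thesis using qk[of l] l qw by auto
        next
          case False thus ?thesis by (intro mult_right_mono, auto)
        qed
      qed
      have "lam k < s" using qk[of k] k qw by force
      hence "lam k * (col P k \<bullet> w)^2 < s * (col P k \<bullet> w)^2" using k(2) by (intro mult_strict_right_mono, auto)
      thus "\<exists>l\<in>{..<n}. lam l * (col P l \<bullet> w)^2 < s * (col P l \<bullet> w)^2" using k(1) by auto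
    qed simp
    thus False using eq by linarith
  qed
  show ?thesis unfolding lambda2_def C_def[symmetric] eig using second_largest[OF B A] .
qed

lemma decomp:
  fixes x :: "nat \<Rightarrow> real vec"
  assumes x: "\<forall>i<n. x i \<in> carrier_vec d" and nd: "n > d + 2"
  shows "dist_matrix n x = centered (dist_matrix n x) + lambda2 (centered (dist_matrix n x)) \<cdot>\<^sub>m Jmat n"
proof -
  let ?D = "dist_matrix n x"
  have dimD: "dim_row ?D = n" unfolding dist_matrix_def by simp
  have cent: "centered ?D = ?D - sigma ?D \<cdot>\<^sub>m Jmat n" unfolding centered_def dimD ..
  have lam: "lambda2 (centered ?D) = sigma ?D" unfolding cent using main_lambda2[OF x] nd by simp
  show ?thesis unfolding lam unfolding cent
    by (rule eq_matI, auto simp: dist_matrix_def Jmat_def)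
qed

lemma dist_diag0:
  assumes x: "\<forall>i<n. x i \<in> carrier_vec d" and i: "i < n"
  shows "dist_matrix n x $$ (i,i) = 0"
  using dist_entry[OF x i i] by simp

lemma dist_sym:
  assumes x: "\<forall>i<n. x i \<in> carrier_vec d" and i: "i < n" and j: "j < n"
  shows "dist_matrix n x $$ (i,j) = dist_matrix n x $$ (j,i)"
  using dist_entry[OF x i j] dist_entry[OF x j i] by (simp add: power2_commute)

lemma delta_J:
  fixes x y :: "nat \<Rightarrow> real vec"
  assumes x: "\<forall>i<n. x i \<in> carrier_vec d" and y: "\<forall>i<n. y i \<in> carrier_vec d" and n: "n \<ge> 3"
    and del: "Delta (dist_matrix n y) = Delta (dist_matrix n x)"
  shows "\<exists>c. dist_matrix n y = dist_matrix n x + c \<cdot>\<^sub>m Jmat n"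
proof -
  let ?Dx = "dist_matrix n x" and ?Dy = "dist_matrix n y"
  define E where "E i j = ?Dy $$ (i,j) - ?Dx $$ (i,j)" for i j
  have dims: "dim_row ?Dx = n" "dim_row ?Dy = n" unfolding dist_matrix_def by auto
  have S: "E a b = E b a" if "a < n" "b < n" for a b
    unfolding E_def using dist_sym[OF x that] dist_sym[OF y that] by simp
  have R0: "E a b = E a c" if "a < n" "b < n" "c < n" "a \<noteq> b" "a \<noteq> c" "b < c" for a b c
  proof -
    have "Delta ?Dy (a,b,c) = Delta ?Dx (a,b,c)" using del by simp
    thus ?thesis using that dims unfolding Delta_def E_def by simp
  qed
  have R: "E a b = E a c" if "a < n" "b < n" "c < n" "a \<noteq> b" "a \<noteq> c" "b \<noteq> c" for a b c
  proof (cases "b < c")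
    case True thus ?thesis using R0 that by blast
  next
    case False hence "c < b" using that by linarith
    thus ?thesis using R0[of a c b] that by simp
  qed
  have n01: "0 < n" "1 < n" using n by auto
  have key: "E a b = E 0 1" if ab: "a < n" "b < n" "a \<noteq> b" for a b
  proof -
    consider "a = 0" | "a = 1" | "a \<noteq> 0 \<and> a \<noteq> 1" by blast
    thus ?thesis
    proof cases
      case 1 thus ?thesis using R[of 0 b 1] ab n01 by (cases "b = 1", auto)
    next
      case 2
      show ?thesis
      proof (cases "b = 0")
        case True thus ?thesis using 2 S n01 by auto
      next
        case False thus ?thesis using 2 R[of 1 b 0] S[of 1 0] ab n01 by auto
      qed
    next
      case 3
      show ?thesis
      proof (cases "b = 0")
        case True thus ?thesis using 3 S[of a 0] R[of 0 a 1] ab n01 by auto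
      next
        case b0: False
        show ?thesis
        proof (cases "b = 1")
          case True thus ?thesis using 3 S[of a 1] R[of 1 a 0] S[of 1 0] ab n01 by auto
        next
          case False thus ?thesis using 3 b0 R[of a b 0] S[of a 0] R[of 0 a 1] ab n01 by auto
        qed
      qed
    qed
  qed
  show ?thesis
  proof (intro exI[of _ "E 0 1"] eq_matI)
    fix i j assume "i < dim_row (?Dx + E 0 1 \<cdot>\<^sub>m Jmat n)" "j < dim_col (?Dx + E 0 1 \<cdot>\<^sub>m Jmat n)"
    hence ij: "i < n" "j < n" unfolding dist_matrix_def Jmat_def by auto
    show "?Dy $$ (i,j) = (?Dx + E 0 1 \<cdot>\<^sub>m Jmat n) $$ (i,j)"
    proof (cases "i = j")
      case True thus ?thesis using ij dist_diag0[OF x] dist_diag0[OF y]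
        by (simp add: Jmat_def dist_matrix_def)
    next
      case False
      have "?Dy $$ (i,j) = ?Dx $$ (i,j) + E 0 1" using key[OF ij False] unfolding E_def by simp
      thus ?thesis using ij False by (simp add: Jmat_def dist_matrix_def)
    qed
  qed (auto simp: dist_matrix_def Jmat_def)
qed

theorem theorem4:
  fixes n d :: nat and x :: "nat \<Rightarrow> real vec"
  assumes "\<forall>i<n. x i \<in> carrier_vec d"
    and "n > d + 2"
  shows "dist_matrix n x = centered (dist_matrix n x)
           + lambda2 (centered (dist_matrix n x)) \<cdot>\<^sub>m Jmat n
       \<and> (\<forall>y. (\<forall>i<n. y i \<in> carrier_vec d) \<longrightarrow>
            centered (dist_matrix n y) = centered (dist_matrix n x) \<longrightarrow>
            dist_matrix n y = dist_matrix n x)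
       \<and> (\<forall>y. (\<forall>i<n. y i \<in> carrier_vec d) \<longrightarrow>
            Delta (dist_matrix n y) = Delta (dist_matrix n x) \<longrightarrow>
            dist_matrix n y = dist_matrix n x)"
proof (intro conjI allI impI)
  note x = assms(1) and nd = assms(2)
  show "dist_matrix n x = centered (dist_matrix n x) + lambda2 (centered (dist_matrix n x)) \<cdot>\<^sub>m Jmat n"
    by (rule decomp[OF x nd])
  fix y :: "nat \<Rightarrow> real vec"
  assume y: "\<forall>i<n. y i \<in> carrier_vec d"
  {
    assume "centered (dist_matrix n y) = centered (dist_matrix n x)"
    thus "dist_matrix n y = dist_matrix n x" using decomp[OF x nd] decomp[OF y nd] by metis
  }
  {
    assume del: "Delta (dist_matrix n y) = Delta (dist_matrix n x)"
    obtain c where c: "dist_matrix n y = dist_matrix n x + c \<cdot>\<^sub>m Jmat n"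
      using delta_J[OF x y _ del] nd by auto
    let ?Dx = "dist_matrix n x" and ?Dy = "dist_matrix n y"
    define sg where "sg = sigma ?Dy"
    have dims: "dim_row ?Dx = n" "dim_row ?Dy = n" unfolding dist_matrix_def by auto
    have "centered ?Dy = ?Dy - sg \<cdot>\<^sub>m Jmat n" unfolding centered_def dims sg_def ..
    have l1: "lambda2 (?Dy - sg \<cdot>\<^sub>m Jmat n) = sg" using main_lambda2[OF y] nd by simp
    have eqm: "?Dy - sg \<cdot>\<^sub>m Jmat n = ?Dx - (sg - c) \<cdot>\<^sub>m Jmat n"
      unfolding c by (rule eq_matI, auto simp: dist_matrix_def Jmat_def algebra_simps)
    have l2: "lambda2 (?Dx - (sg - c) \<cdot>\<^sub>m Jmat n) = sg - c" using main_lambda2[OF x] nd by simp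
    have "c = 0" using l1 l2 eqm by simp
    thus "?Dy = ?Dx" unfolding c by (intro eq_matI, auto simp: dist_matrix_def Jmat_def)
  }
qed

end
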